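(* Let $f$ be the solution of the radial Loewner PDE $$\frac{\partial f}{\partial t}(z,t)=-z f'(z,t)\,\frac{e^{it}+z}{e^{it}-z},\qquad f(z,0)=z,\quad (z,t)\in\mathbb{D}\times[0,\infty),$$ which is given by $f(z,t)=\phi^{-1}(e^{(i-1)t}\phi(e^{-it}z))$ with $\phi(z)=z(z-i)^{i-1}$ (a univalent function on $\mathbb{D}$). Let $\gamma(t):=f(e^{it},t)$, $t\ge0$, be the trace of the tip point (the boundary value of $f(\cdot,t)$ at $e^{it}$, equivalently $\gamma(t)=\phi^{-1}(e^{(i-1)t}\phi(1))$), and write $\gamma(t)=r(t)e^{i\Theta(t)}$ with $\Theta$ continuous and $\Theta(0)=0$. Then $r$ is decreasing with $r(t)\to0$ as $t\to\infty$, and $\Theta$ is increasing (with $\Theta'(t)>0$ for $t>0$) and $\Theta(t)\to\infty$ as $t\to\infty$; i.e. $\gamma$ spirals about the origin.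
   Context: $\mathbb{D}$ is the unit disc; $f'$ denotes $\partial f/\partial z$. The power $(z-i)^{i-1}$ is defined via a holomorphic branch of $\log(z-i)$ on $\mathbb{D}$. *)

theory Defs
  imports "HOL-Analysis.Analysis"
begin

text \<open>phi z = z (z - i)^(i - 1), using the principal branch of log(z - i),
  which is holomorphic on the unit disc (z - i is never a non-positive real there)
  and also defined at the boundary point 1.\<close>
definition phi :: "complex \<Rightarrow> complex" where
  "phi z = z * exp ((\<i> - 1) * Ln (z - \<i>))"

definition gamma :: "real \<Rightarrow> complex" where
  "gamma t = (if t = 0 then 1
              else inv_into (ball 0 1) phi (exp ((\<i> - 1) * complex_of_real t) * phi 1))"

end

theory Submission
  imports Defs "HOL-Complex_Analysis.Complex_Analysis"
begin


lemma D_Im: "z \<in> ball 0 1 \<Longrightarrow> Im z < 1"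
  using abs_Im_le_cmod[of z] by auto

lemma notnp: "z \<in> ball 0 1 \<Longrightarrow> z - \<i> \<notin> \<real>\<^sub>\<le>\<^sub>0"
  using D_Im[of z] by (auto simp: complex_nonpos_Reals_iff)

lemma notnp2: assumes "cmod z \<le> 1" "z \<noteq> \<i>" shows "z - \<i> \<notin> \<real>\<^sub>\<le>\<^sub>0"
proof
  assume "z - \<i> \<in> \<real>\<^sub>\<le>\<^sub>0"
  then have "Im z = 1" "Re z \<le> 0" by (auto simp: complex_nonpos_Reals_iff)
  moreover have "(Re z)^2 + (Im z)^2 \<le> 1" using assms(1)
    by (metis cmod_power2 power_le_one_iff norm_ge_zero)
  ultimately have "Re z = 0" by auto
  with \<open>Im z = 1\<close> have "z = \<i>" by (simp add: complex_eq_iff)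
  with assms show False by simp
qed

lemma Ln_shift_deriv:
  assumes "z - \<i> \<notin> \<real>\<^sub>\<le>\<^sub>0"
  shows "((\<lambda>w. Ln (w - \<i>)) has_field_derivative inverse (z - \<i>)) (at z)"
proof -
  have "((Ln \<circ> (\<lambda>w. w - \<i>)) has_field_derivative inverse (z - \<i>) * 1) (at z)"
    by (rule DERIV_chain) (auto intro!: has_field_derivative_Ln assms derivative_eq_intros)
  then show ?thesis by (simp add: o_def)
qed

lemma phi_deriv:
  assumes "z - \<i> \<notin> \<real>\<^sub>\<le>\<^sub>0"
  shows "(phi has_field_derivative exp((\<i>-1)*Ln(z-\<i>)) * (1 + (\<i>-1)*z/(z-\<i>))) (at z)"
proof -
  have nz: "z - \<i> \<noteq> 0" using assms by auto
  show ?thesis unfolding phi_def[abs_def]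
    by (rule derivative_eq_intros refl assms | use nz in \<open>simp add: field_simps\<close>)+
qed

lemma phi_holo: "phi holomorphic_on ball 0 1"
  using phi_deriv notnp by (metis holomorphic_on_def field_differentiable_at_within field_differentiable_def)

lemma phi_cont: "cmod z \<le> 1 \<Longrightarrow> z \<noteq> \<i> \<Longrightarrow> isCont phi z"
  using phi_deriv[OF notnp2] DERIV_isCont by blast


lemma vd_Re: assumes "(f has_vector_derivative f') F" shows "((\<lambda>x. Re (f x)) has_real_derivative Re f') F"
proof -
  have "((\<lambda>x. Re (f x)) has_derivative (\<lambda>x. Re (x *\<^sub>R f'))) F"
    using has_derivative_Re assms unfolding has_vector_derivative_def by blast
  moreover have "(\<lambda>x. Re (x *\<^sub>R f')) = (*) (Re f')" by (auto simp: fun_eq_iff)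
  ultimately show ?thesis by (simp add: has_field_derivative_def)
qed

lemma vd_Im: assumes "(f has_vector_derivative f') F" shows "((\<lambda>x. Im (f x)) has_real_derivative Im f') F"
proof -
  have "((\<lambda>x. Im (f x)) has_derivative (\<lambda>x. Im (x *\<^sub>R f'))) F"
    using has_derivative_Im assms unfolding has_vector_derivative_def by blast
  moreover have "(\<lambda>x. Im (x *\<^sub>R f')) = (*) (Im f')" by (auto simp: fun_eq_iff)
  ultimately show ?thesis by (simp add: has_field_derivative_def)
qed

definition Lf :: "complex \<Rightarrow> complex" where "Lf \<zeta> = \<zeta> + (\<i>-1)*Ln(exp \<zeta> - \<i>)"

lemma exp_ball: "Re \<zeta> < 0 \<Longrightarrow> exp \<zeta> \<in> ball 0 1"
  by simp

lemma Lf_deriv: assumes "Re \<zeta> < 0"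
  shows "(Lf has_field_derivative 1 + (\<i>-1)*exp \<zeta>/(exp \<zeta> - \<i>)) (at \<zeta>)"
proof -
  have np: "exp \<zeta> - \<i> \<notin> \<real>\<^sub>\<le>\<^sub>0" using notnp exp_ball assms by blast
  then have nz: "exp \<zeta> - \<i> \<noteq> 0" by auto
  have "((\<lambda>w. Ln (w - \<i>)) \<circ> exp has_field_derivative inverse (exp \<zeta> - \<i>) * exp \<zeta>) (at \<zeta>)"
    by (rule DERIV_chain) (auto intro!: Ln_shift_deriv np DERIV_exp)
  then have "((\<lambda>z. Ln (exp z - \<i>)) has_field_derivative inverse (exp \<zeta> - \<i>) * exp \<zeta>) (at \<zeta>)"
    by (simp add: o_def)
  then have "((\<lambda>z. (\<i>-1) * Ln (exp z - \<i>)) has_field_derivative (\<i>-1) * (inverse (exp \<zeta> - \<i>) * exp \<zeta>)) (at \<zeta>)"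
    by (rule DERIV_cmult)
  then have "((\<lambda>z. z + (\<i>-1) * Ln (exp z - \<i>)) has_field_derivative 1 + (\<i>-1) * (inverse (exp \<zeta> - \<i>) * exp \<zeta>)) (at \<zeta>)"
    by (rule DERIV_add[OF DERIV_ident])
  moreover have "1 + (\<i>-1) * (inverse (exp \<zeta> - \<i>) * exp \<zeta>) = 1 + (\<i>-1)*exp \<zeta>/(exp \<zeta> - \<i>)"
    by (simp add: divide_inverse mult_ac)
  ultimately show ?thesis unfolding Lf_def[abs_def] by simp
qed

lemma key_re: assumes "cmod z < 1" shows "Re((1+\<i>)*(1 + (\<i>-1)*z/(z-\<i>))) > 0"
proof -
  have zi: "z \<noteq> \<i>" using assms by auto
  then have nz: "z - \<i> \<noteq> 0" by simp
  have e: "(1+\<i>)*(1 + (\<i>-1)*z/(z-\<i>)) = (\<i>-1)*(z-1)/(z-\<i>)"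
    using nz by (simp add: divide_simps) (simp add: algebra_simps)
  have n2: "(Re z)^2 + (Im z)^2 < 1" using assms
    by (metis cmod_power2 power_strict_mono norm_ge_zero one_power2 zero_less_numeral)
  have pos: "(Re (z - \<i>))\<^sup>2 + (Im (z - \<i>))\<^sup>2 > 0" using nz
    by (metis cmod_power2 zero_less_norm_iff zero_less_power)
  have "Re((\<i>-1)*(z-1)/(z-\<i>)) = (1 - (Re z)^2 - (Im z)^2) / ((Re (z - \<i>))\<^sup>2 + (Im (z - \<i>))\<^sup>2)"
    unfolding Re_divide by simp (simp add: algebra_simps power2_eq_square)
  also have "\<dots> > 0" using n2 pos by (intro divide_pos_pos) auto
  finally show ?thesis using e by simp
qed

lemma Lf_inj: assumes a: "Re a < 0" and b: "Re b < 0" and eq: "Lf a = Lf b" shows "a = b"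
proof (rule ccontr)
  assume "a \<noteq> b"
  define d where "d = b - a"
  have dnz: "d \<noteq> 0" using \<open>a \<noteq> b\<close> by (simp add: d_def)
  define g where "g s = Re ((1+\<i>) * Lf (a + of_real s * d) / d)" for s :: real
  have inside: "Re (a + of_real s * d) < 0" if "0 \<le> s" "s \<le> 1" for s :: real
  proof -
    have "Re (a + of_real s * d) = (1 - s) * Re a + s * Re b" by (simp add: d_def algebra_simps)
    also have "\<dots> < 0"
    proof (cases "s = 0")
      case True then show ?thesis using a by simp
    next
      case False
      then have "s > 0" using that by simp
      then have "s * Re b < 0" using b by (simp add: mult_pos_neg)
      moreover have "(1 - s) * Re a \<le> 0" using a that by (simp add: mult_nonneg_nonpos)
      ultimately show ?thesis by simp
    qed
    finally show ?thesis .
  qed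
  have der: "(g has_real_derivative Re ((1+\<i>)*(1 + (\<i>-1)*exp (a + of_real s * d)/(exp (a + of_real s * d) - \<i>)))) (at s)"
    if "0 \<le> s" "s \<le> 1" for s :: real
  proof -
    have ch: "((Lf \<circ> (\<lambda>z. a + z * d)) has_field_derivative
       (1 + (\<i>-1)*exp (a + of_real s * d)/(exp (a + of_real s * d) - \<i>)) * (0 + 1 * d)) (at (of_real s))"
      by (rule DERIV_chain) (rule Lf_deriv[OF inside[OF that]], auto intro!: derivative_eq_intros)
    have "((\<lambda>z. (1+\<i>) * Lf (a + z * d) / d) has_field_derivative
       (1+\<i>) * ((1 + (\<i>-1)*exp (a + of_real s * d)/(exp (a + of_real s * d) - \<i>)) * (0 + 1 * d)) / d) (at (of_real s))"
      using ch unfolding o_def by (intro derivative_eq_intros) (auto simp: dnz)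
    then have hv: "((\<lambda>x. (1+\<i>) * Lf (a + of_real x * d) / d) has_vector_derivative
       (1+\<i>) * ((1 + (\<i>-1)*exp (a + of_real s * d)/(exp (a + of_real s * d) - \<i>)) * (0 + 1 * d)) / d) (at s)"
      by (rule has_vector_derivative_real_field)
    have eqd: "(1+\<i>) * ((1 + (\<i>-1)*exp (a + of_real s * d)/(exp (a + of_real s * d) - \<i>)) * (0 + 1 * d)) / d
       = (1+\<i>)*(1 + (\<i>-1)*exp (a + of_real s * d)/(exp (a + of_real s * d) - \<i>))"
      using dnz by simp
    show ?thesis using vd_Re[OF hv] unfolding g_def eqd .
  qed
  have pos: "\<exists>y. DERIV g s :> y \<and> y > 0" if "0 < s" "s < 1" for s :: real
    using der[of s] key_re[of "exp (a + of_real s * d)"] inside[of s] that by auto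
  have cont: "continuous_on {0..1} g"
  proof (rule continuous_at_imp_continuous_on, intro ballI)
    fix x :: real assume "x \<in> {0..1}"
    then show "isCont g x" using der[of x] DERIV_isCont by auto
  qed
  have "g 0 < g 1"
    by (rule DERIV_pos_imp_increasing_open[OF _ pos cont]) auto
  moreover have "g 0 = g 1" using eq by (simp add: g_def d_def)
  ultimately show False by simp
qed

lemma phi_zero: "phi z = 0 \<longleftrightarrow> z = 0"
  by (simp add: phi_def)

lemma phi_Lf: "phi (exp \<zeta>) = exp (Lf \<zeta>)"
  by (simp add: phi_def Lf_def exp_add)

lemma Lf_shift: "Lf (\<zeta> + of_int (2 * n) * pi * \<i>) = Lf \<zeta> + of_int (2 * n) * pi * \<i>"
proof -
  have "exp (\<zeta> + of_int (2 * n) * pi * \<i>) = exp \<zeta>"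
    by (metis exp_eq)
  then show ?thesis by (simp add: Lf_def)
qed

lemma phi_inj: "inj_on phi (ball 0 1)"
proof (rule inj_onI)
  fix z1 z2 assume z1: "z1 \<in> ball 0 1" and z2: "z2 \<in> ball 0 1" and eq: "phi z1 = phi z2"
  show "z1 = z2"
  proof (cases "z1 = 0 \<or> z2 = 0")
    case True then show ?thesis using eq phi_zero by metis
  next
    case False
    then have nz: "z1 \<noteq> 0" "z2 \<noteq> 0" by auto
    define a where "a = Ln z1"
    define b where "b = Ln z2"
    have ra: "Re a < 0" using z1 nz by (simp add: a_def)
    have rb: "Re b < 0" using z2 nz by (simp add: b_def)
    have "exp (Lf a) = exp (Lf b)" using eq nz phi_Lf[of a] phi_Lf[of b] by (simp add: a_def b_def)
    then obtain n :: int where n: "Lf a = Lf b + of_int (2 * n) * pi * \<i>" using exp_eq by blast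
    have "Lf a = Lf (b + of_int (2 * n) * pi * \<i>)" using n Lf_shift by simp
    moreover have "Re (b + of_int (2 * n) * pi * \<i>) < 0" using rb by simp
    ultimately have "a = b + of_int (2 * n) * pi * \<i>" using Lf_inj ra by blast
    then have "exp a = exp b" by (metis exp_eq)
    then show ?thesis using nz by (simp add: a_def b_def)
  qed
qed


lemma Im_Ln_neg: assumes "Im z < 0" shows "-pi < Im (Ln z) \<and> Im (Ln z) < 0"
proof -
  have np: "z \<notin> \<real>\<^sub>\<le>\<^sub>0" using assms by (auto simp: complex_nonpos_Reals_iff)
  have "Ln (cnj z) = cnj (Ln z)" using cnj_Ln[OF np] by simp
  then have "Im (Ln (cnj z)) = - Im (Ln z)" by simp
  moreover have "0 < Im (Ln (cnj z)) \<and> Im (Ln (cnj z)) < pi" using assms by (intro Im_Ln_pos_lt_imp) simp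
  ultimately show ?thesis by auto
qed

lemma polar_parts: assumes "z \<noteq> 0"
  shows "Re z = cmod z * cos (Im (Ln z))" "Im z = cmod z * sin (Im (Ln z))"
proof -
  have "z = exp (Ln z)" using assms by simp
  then have "Re z = exp (Re (Ln z)) * cos (Im (Ln z))" "Im z = exp (Re (Ln z)) * sin (Im (Ln z))"
    by (metis Re_exp, metis Im_exp)
  then show "Re z = cmod z * cos (Im (Ln z))" "Im z = cmod z * sin (Im (Ln z))"
    using assms by simp_all
qed

lemma Im_lt1: assumes "cmod w \<le> 1" "w \<noteq> \<i>" shows "Im w < 1"
proof (rule ccontr)
  assume "\<not> Im w < 1"
  moreover have "Im w \<le> 1" using abs_Im_le_cmod[of w] assms(1) by linarith
  ultimately have i1: "Im w = 1" by simp
  have "(Re w)^2 + (Im w)^2 \<le> 1" using assms(1)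
    by (metis cmod_power2 power_le_one_iff norm_ge_zero)
  then have "(Re w)^2 \<le> 0" using i1 by simp
  then have "Re w = 0" by simp
  with i1 have "w = \<i>" by (simp add: complex_eq_iff)
  with assms show False by simp
qed

lemma norm_phi: "w \<noteq> \<i> \<Longrightarrow> cmod (phi w) = cmod w * exp (- ln (cmod (w - \<i>)) - Im (Ln (w - \<i>)))"
  by (simp add: phi_def norm_mult algebra_simps)

lemma phi_lower: assumes "cmod w \<le> 1" "w \<noteq> \<i>"
  shows "cmod (phi w) \<ge> cmod w / cmod (w - \<i>)"
proof -
  have "Im (w - \<i>) < 0" using Im_lt1[OF assms] by simp
  then have b: "Im (Ln (w - \<i>)) < 0" using Im_Ln_neg by blast
  have rp: "cmod (w - \<i>) > 0" using assms by simp
  have "cmod w / cmod (w - \<i>) = cmod w * exp (- ln (cmod (w - \<i>)))"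
    using rp by (simp add: exp_minus field_simps)
  also have "\<dots> \<le> cmod w * exp (- ln (cmod (w - \<i>)) - Im (Ln (w - \<i>)))"
    using b by (intro mult_left_mono) auto
  finally show ?thesis using norm_phi assms by simp
qed

lemma far_from_i: assumes "cmod w \<le> 1" "w \<noteq> \<i>" "cmod (phi w) \<le> M"
  shows "cmod (w - \<i>) \<ge> 1/(1+M)"
proof -
  have rp: "cmod (w - \<i>) > 0" using assms by simp
  have M0: "M \<ge> 0" using assms(3) norm_ge_zero order_trans by blast
  have "1 = cmod (w - (w - \<i>))" by simp
  also have "\<dots> \<le> cmod w + cmod (w - \<i>)" by (rule norm_triangle_ineq4)
  finally have t: "1 - cmod (w - \<i>) \<le> cmod w" by simp
  have "cmod w / cmod (w - \<i>) \<le> M" using phi_lower[OF assms(1,2)] assms(3) by simp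
  then have "cmod w \<le> M * cmod (w - \<i>)" using rp by (simp add: divide_le_eq)
  with t have "1 \<le> (1 + M) * cmod (w - \<i>)" by (simp add: algebra_simps)
  then show ?thesis using M0 by (simp add: divide_le_eq mult.commute)
qed

lemma Ln_circle: assumes "-3*pi/2 < \<theta>" "\<theta> < pi/2"
  shows "Ln (exp (\<i> * of_real \<theta>) - \<i>) = of_real (ln (2 * sin (pi/4 - \<theta>/2))) - \<i> * of_real (pi/4 - \<theta>/2)"
proof -
  define u where "u = pi/4 - \<theta>/2"
  have u: "0 < u" "u < pi" using assms by (auto simp: u_def)
  have s: "sin u > 0" using sin_gt_zero[OF u] .
  have th: "\<theta> = pi/2 - 2*u" by (simp add: u_def)
  have c1: "cos \<theta> = 2 * sin u * cos u" unfolding th by (simp add: cos_diff sin_double)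
  have c2: "sin \<theta> = 1 - 2 * (sin u)^2" unfolding th by (simp add: sin_diff cos_double_sin)
  have e1: "exp (of_real (ln (2 * sin u)) - \<i> * of_real u) = exp (of_real (ln (2 * sin u)) + \<i> * of_real (-u))"
    by simp
  have "Re (exp (of_real (ln (2 * sin u)) + \<i> * of_real (-u))) = 2 * sin u * cos u"
    "Im (exp (of_real (ln (2 * sin u)) + \<i> * of_real (-u))) = - 2 * sin u * sin u"
    using s by (simp_all only: Re_exp Im_exp) simp_all
  then have "exp (\<i> * of_real \<theta>) - \<i> = exp (of_real (ln (2 * sin u)) - \<i> * of_real u)"
    unfolding e1 using c1 c2 s by (simp add: complex_eq_iff Re_exp Im_exp power2_eq_square)
  moreover have "Ln (exp (of_real (ln (2 * sin u)) - \<i> * of_real u)) = of_real (ln (2 * sin u)) - \<i> * of_real u"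
    using u by (intro Ln_exp) auto
  ultimately show ?thesis by (simp add: u_def)
qed

lemma Ln_1mi: "Ln (1 - \<i>) = of_real (ln (sqrt 2)) - \<i> * of_real (pi/4)"
  using Ln_circle[of 0] by (simp add: sin_45)

lemma norm_phi1: "cmod (phi 1) = exp (pi/4) / sqrt 2"
proof -
  have "cmod (phi 1) = exp (- ln (cmod (1 - \<i>)) - Im (Ln (1 - \<i>)))" using norm_phi[of 1] by simp
  also have "cmod (1 - \<i>) = sqrt 2" by (simp add: cmod_def)
  finally show ?thesis by (simp add: Ln_1mi exp_diff)
qed

lemma h_max: assumes "0 < v" "v < pi" "v \<noteq> pi/4"
  shows "sin v * exp (-v) < sin (pi/4) * exp (-(pi/4))"
proof -
  define h where "h x = sin x * exp (-x)" for x :: real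
  have hd: "(h has_real_derivative (cos x - sin x) * exp (-x)) (at x)" for x
    unfolding h_def by (rule derivative_eq_intros refl | simp add: algebra_simps)+
  have cs: "cos x - sin x = sqrt 2 * sin (pi/4 - x)" for x
    by (simp add: sin_diff sin_45 cos_45 algebra_simps)
  have hc: "continuous_on S h" for S
    using hd by (meson DERIV_isCont continuous_at_imp_continuous_on)
  show ?thesis
  proof (cases "v < pi/4")
    case True
    have "h v < h (pi/4)"
    proof (rule DERIV_pos_imp_increasing_open[OF True _ hc])
      fix x assume "v < x" "x < pi/4"
      then have "sin (pi/4 - x) > 0" using assms by (intro sin_gt_zero) auto
      then have "0 < (cos x - sin x) * exp (-x)" unfolding cs by simp
      then show "\<exists>y. DERIV h x :> y \<and> 0 < y" using hd by blast
    qed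
    then show ?thesis by (simp add: h_def)
  next
    case False
    then have vg: "pi/4 < v" using assms by simp
    have "h v < h (pi/4)"
    proof (rule DERIV_neg_imp_decreasing_open[OF vg _ hc])
      fix x assume "pi/4 < x" "x < v"
      then have "sin (x - pi/4) > 0" using assms by (intro sin_gt_zero) auto
      then have "sin (pi/4 - x) < 0" by (metis minus_diff_eq neg_less_0_iff_less sin_minus)
      then have "(cos x - sin x) * exp (-x) < 0" unfolding cs by (simp add: mult_pos_neg mult_neg_pos)
      then show "\<exists>y. DERIV h x :> y \<and> y < 0" using hd by blast
    qed
    then show ?thesis by (simp add: h_def)
  qed
qed

lemma boundary_phi: assumes "cmod w = 1" "w \<noteq> \<i>"
  shows "cmod (phi 1) \<le> cmod (phi w)" and "cmod (phi w) = cmod (phi 1) \<Longrightarrow> w = 1"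
proof -
  define z where "z = w - \<i>"
  define \<rho> where "\<rho> = cmod z"
  define \<beta> where "\<beta> = Im (Ln z)"
  have znz: "z \<noteq> 0" using assms by (simp add: z_def)
  have rp: "\<rho> > 0" using znz by (simp add: \<rho>_def)
  have "Im z < 0" using Im_lt1[of w] assms by (simp add: z_def)
  then have bb: "-pi < \<beta>" "\<beta> < 0" using Im_Ln_neg \<beta>_def by auto
  have pz: "Re z = \<rho> * cos \<beta>" "Im z = \<rho> * sin \<beta>" using polar_parts[OF znz] by (simp_all add: \<rho>_def \<beta>_def)
  have "(Re w)^2 + (Im w)^2 = 1" using assms(1) by (metis cmod_power2 one_power2)
  then have "(Re z)^2 + (Im z + 1)^2 = 1" by (simp add: z_def)
  then have "(\<rho> * cos \<beta>)^2 + (\<rho> * sin \<beta> + 1)^2 = 1" unfolding pz .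
  moreover have "(\<rho> * cos \<beta>)^2 + (\<rho> * sin \<beta> + 1)^2 = \<rho>^2 * ((cos \<beta>)^2 + (sin \<beta>)^2) + 2 * \<rho> * sin \<beta> + 1"
    by algebra
  moreover have "\<rho>^2 * ((cos \<beta>)^2 + (sin \<beta>)^2) = \<rho>^2" by (simp only: sin_cos_squared_add2 mult_1_right)
  ultimately have "\<rho>^2 + 2 * \<rho> * sin \<beta> = 0" by linarith
  then have "\<rho> * (\<rho> + 2 * sin \<beta>) = 0" by (simp add: algebra_simps power2_eq_square)
  then have rho: "\<rho> = - 2 * sin \<beta>" using rp by simp
  have "exp (- ln \<rho> - \<beta>) = exp (-\<beta> - ln \<rho>)" by (simp add: algebra_simps)
  also have "\<dots> = exp (-\<beta>) / exp (ln \<rho>)" by (rule exp_diff)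
  also have "\<dots> = exp (-\<beta>) / \<rho>" using rp by simp
  finally have nw: "cmod (phi w) = exp (-\<beta>) / \<rho>"
    using norm_phi[OF assms(2)] assms(1) by (simp add: z_def \<rho>_def \<beta>_def)
  define v where "v = - \<beta>"
  have v: "0 < v" "v < pi" using bb by (auto simp: v_def)
  have sv: "sin v > 0" using sin_gt_zero[OF v] .
  have nw2: "cmod (phi w) = exp v / (2 * sin v)" using nw rho by (simp add: v_def)
  have n1: "cmod (phi 1) = exp (pi/4) / (2 * sin (pi/4))"
    using norm_phi1 by (simp add: sin_45)
  have key: "sin v * exp (-v) \<le> sin (pi/4) * exp (-(pi/4))" "sin v * exp (-v) = sin (pi/4) * exp (-(pi/4)) \<Longrightarrow> v = pi/4"
    using h_max[OF v] by (fastforce, fastforce)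
  have s45: "sin (pi/4) > 0" by (simp add: sin_45)
  have ep: "exp v > 0" "exp (pi/4) > 0" by simp_all
  have r1: "exp (pi/4) / (2 * sin (pi/4)) \<le> exp v / (2 * sin v) \<longleftrightarrow> exp (pi/4) * sin v \<le> exp v * sin (pi/4)"
    using sv s45 by (simp add: divide_simps mult.commute)
  have r2: "sin v * exp (-v) \<le> sin (pi/4) * exp (-(pi/4)) \<longleftrightarrow> exp (pi/4) * sin v \<le> exp v * sin (pi/4)"
    using ep by (simp add: exp_minus divide_simps mult.commute)
  have r3: "exp (pi/4) / (2 * sin (pi/4)) = exp v / (2 * sin v) \<longleftrightarrow> exp (pi/4) * sin v = exp v * sin (pi/4)"
    using sv s45 by (simp add: divide_simps mult.commute)
  have r4: "sin v * exp (-v) = sin (pi/4) * exp (-(pi/4)) \<longleftrightarrow> exp (pi/4) * sin v = exp v * sin (pi/4)"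
    using ep by (simp add: exp_minus divide_simps mult.commute)
  have eq_iff: "cmod (phi 1) \<le> cmod (phi w) \<longleftrightarrow> sin v * exp (-v) \<le> sin (pi/4) * exp (-(pi/4))"
    unfolding nw2 n1 r1 r2 ..
  show "cmod (phi 1) \<le> cmod (phi w)" using eq_iff key(1) by simp
  assume "cmod (phi w) = cmod (phi 1)"
  then have "sin v * exp (-v) = sin (pi/4) * exp (-(pi/4))"
    unfolding nw2 n1 r4 using r3 by simp
  then have "v = pi/4" using key(2) by simp
  then have "\<beta> = -(pi/4)" by (simp add: v_def)
  then have "\<rho> = sqrt 2" using rho by (simp add: sin_45)
  then have "Re z = 1" "Im z = -1" using pz \<open>\<beta> = -(pi/4)\<close> by (simp_all add: cos_45 sin_45)
  then show "w = 1" by (simp add: z_def complex_eq_iff)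
qed


lemma lens: assumes w: "w \<in> ball 0 1" and L: "(Re w - 1)^2 + (Im w - 1)^2 \<le> 1"
  shows "pi/2 < ln (cmod w) + Im (Ln w) - 2 * Im (Ln (w - \<i>))"
    and "ln (cmod w) + Im (Ln w) - 2 * Im (Ln (w - \<i>)) < 3*pi/2"
proof -
  define x where "x = Re w"
  define y where "y = Im w"
  have n2: "x^2 + y^2 < 1" using w unfolding x_def y_def
    by (metis cmod_power2 mem_ball_0 norm_ge_zero power_strict_mono one_power2 zero_less_numeral)
  have L': "(x - 1)^2 + (y - 1)^2 \<le> 1" using L by (simp add: x_def y_def)
  have "(x-1)^2 \<le> 1" using L' zero_le_power2[of "y-1"] by linarith
  then have "\<bar>x-1\<bar> \<le> 1" using abs_le_square_iff[of "x-1" 1] by simp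
  then have x0: "x \<ge> 0" by (simp add: abs_le_iff)
  have "(y-1)^2 \<le> 1" using L' zero_le_power2[of "x-1"] by linarith
  then have "\<bar>y-1\<bar> \<le> 1" using abs_le_square_iff[of "y-1" 1] by simp
  then have y0: "y \<ge> 0" by (simp add: abs_le_iff)
  have xp: "x > 0"
  proof (rule ccontr)
    assume "\<not> x > 0" then have "x = 0" using x0 by simp
    then have "(y - 1)^2 \<le> 0" using L' by simp
    then have "y = 1" by simp
    then show False using n2 \<open>x = 0\<close> by simp
  qed
  have yp: "y > 0"
  proof (rule ccontr)
    assume "\<not> y > 0" then have "y = 0" using y0 by simp
    then have "(x - 1)^2 \<le> 0" using L' by simp
    then have "x = 1" by simp
    then show False using n2 \<open>y = 0\<close> by simp
  qed
  have wnz: "w \<noteq> 0" using xp by (auto simp: x_def)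
  define r where "r = cmod w"
  define \<theta> where "\<theta> = Im (Ln w)"
  have rp: "0 < r" "r < 1" using wnz w by (auto simp: r_def)
  have th1: "0 < \<theta>" "\<theta> < pi" using Im_Ln_pos_lt_imp[of w] yp by (auto simp: \<theta>_def y_def)
  have th2: "\<bar>\<theta>\<bar> < pi/2" using Re_Ln_pos_lt_imp[of w] xp by (auto simp: \<theta>_def x_def)
  have th: "0 < \<theta>" "\<theta> < pi/2" using th1 th2 by auto
  define u where "u = exp (\<i> * of_real \<theta>)"
  have wu: "w = of_real r * u"
  proof -
    have "w = exp (Ln w)" using wnz by simp
    also have "Ln w = of_real (ln r) + \<i> * of_real \<theta>" using wnz
      by (simp add: complex_eq_iff r_def \<theta>_def)
    moreover have "exp (complex_of_real (ln r)) = complex_of_real r" by (metis exp_of_real exp_ln rp(1))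
    ultimately show ?thesis by (simp add: u_def exp_add)
  qed
  have xr: "x = r * cos \<theta>" "y = r * sin \<theta>"
    using wu by (simp_all add: x_def y_def u_def Re_exp Im_exp)
  have cp0: "cos \<theta> > 0" "sin \<theta> > 0"
    using th by (auto intro!: cos_gt_zero sin_gt_zero)
  have "(sin \<theta>)^2 < 1" using cp0 by (simp add: sin_squared_eq)
  then have "\<bar>sin \<theta>\<bar> < 1" by (simp add: abs_square_less_1)
  then have cp: "cos \<theta> > 0" "sin \<theta> > 0" "sin \<theta> < 1" using cp0 by auto
  define k where "k = cos \<theta> + sin \<theta>"
  have k1: "k > 1"
  proof -
    have "k^2 = (cos \<theta>)^2 + (sin \<theta>)^2 + 2 * cos \<theta> * sin \<theta>" unfolding k_def by (rule power2_sum)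
    then have "k^2 = 1 + 2 * sin \<theta> * cos \<theta>" by (simp add: mult.commute)
    then have "k^2 > 1" using cp by simp
    moreover have "k > 0" using cp by (simp add: k_def)
    ultimately show ?thesis using power_le_one[of k 2] by fastforce
  qed
  define q where "q s = s^2 - 2 * s * k + 1" for s :: real
  have qr: "q r \<le> 0"
  proof -
    have "(x - 1)^2 + (y - 1)^2 - 1 = r^2 * ((cos \<theta>)^2 + (sin \<theta>)^2) - 2 * r * k + 1"
      unfolding xr k_def by algebra
    then have "q r = (x - 1)^2 + (y - 1)^2 - 1" unfolding q_def by simp
    then show ?thesis using L' by simp
  qed
  have q1: "q 1 < 0" using k1 by (simp add: q_def)
  have qneg: "q s < 0" if "r < s" "s < 1" for s
  proof -
    have id: "(1 - r) * q s = (1 - s) * q r + (s - r) * q 1 + (1 - r) * (s - r) * (s - 1)"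
      unfolding q_def by (simp add: power2_eq_square algebra_simps)
    have "(1 - s) * q r \<le> 0" using qr that by (simp add: mult_nonneg_nonpos)
    moreover have "(s - r) * q 1 < 0" using q1 that by (simp add: mult_pos_neg)
    moreover have "(1 - r) * (s - r) * (s - 1) < 0" using that rp by (simp add: mult_pos_neg)
    ultimately have "(1 - r) * q s < 0" using id by linarith
    then show ?thesis using rp by (simp add: mult_less_0_iff)
  qed
  define f where "f s = ln s + \<theta> - 2 * Im (Ln (of_real s * u - \<i>))" for s :: real
  have np: "of_real s * u - \<i> \<notin> \<real>\<^sub>\<le>\<^sub>0" if "0 < s" "s \<le> 1" for s :: real
  proof -
    have "s * sin \<theta> \<le> 1 * sin \<theta>" using cp that by (intro mult_right_mono) auto
    then have "s * sin \<theta> < 1" using cp by linarith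
    then show ?thesis by (simp add: complex_nonpos_Reals_iff u_def Im_exp)
  qed
  have fd: "(f has_real_derivative 1/s - 2 * Im (u / (of_real s * u - \<i>))) (at s)" if "0 < s" "s \<le> 1" for s :: real
  proof -
    have "((Ln \<circ> (\<lambda>z. z * u - \<i>)) has_field_derivative inverse (of_real s * u - \<i>) * (1 * u - 0)) (at (of_real s))"
      by (rule DERIV_chain) (rule has_field_derivative_Ln[OF np[OF that]], auto intro!: derivative_eq_intros)
    then have "((\<lambda>z. Ln (z * u - \<i>)) has_field_derivative inverse (of_real s * u - \<i>) * (1 * u - 0)) (at (of_real s))"
      by (simp add: o_def)
    then have "((\<lambda>s. Ln (of_real s * u - \<i>)) has_vector_derivative inverse (of_real s * u - \<i>) * (1 * u - 0)) (at s)"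
      by (rule has_vector_derivative_real_field)
    from vd_Im[OF this] have "((\<lambda>s. Im (Ln (of_real s * u - \<i>))) has_real_derivative Im (u / (of_real s * u - \<i>))) (at s)"
      by (simp add: divide_inverse mult.commute)
    note hI = this
    have hln: "(ln has_real_derivative 1/s) (at s)" using that(1) by (rule DERIV_ln_divide)
    have "((\<lambda>s. ln s + \<theta> - 2 * Im (Ln (of_real s * u - \<i>))) has_real_derivative 1/s + 0 - 2 * Im (u / (of_real s * u - \<i>))) (at s)"
      by (intro DERIV_diff DERIV_add DERIV_cmult hln DERIV_const hI)
    moreover have "f = (\<lambda>s. ln s + \<theta> - 2 * Im (Ln (of_real s * u - \<i>)))" by (rule ext) (simp add: f_def)
    ultimately show ?thesis by simp
  qed
  have fneg: "1/s - 2 * Im (u / (of_real s * u - \<i>)) < 0" if "r < s" "s < 1" for s :: real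
  proof -
    have sp: "s > 0" using that rp by simp
    define v where "v = of_real s * u"
    have vr: "Re v = s * cos \<theta>" "Im v = s * sin \<theta>" by (simp_all add: v_def u_def Re_exp Im_exp)
    have vi: "v - \<i> \<noteq> 0" using np[of s] sp that by (auto simp: v_def)
    define N where "N = (Re (v - \<i>))^2 + (Im (v - \<i>))^2"
    have Np: "N > 0" using vi unfolding N_def
      by (metis cmod_power2 zero_less_norm_iff zero_less_power)
    have im: "Im (complex_of_real s * z) = s * Im z" for z by simp
    have i1: "Im (v / (v - \<i>)) = Im (of_real s * (u / (of_real s * u - \<i>)))" by (simp add: v_def)
    have i2: "Im (v / (v - \<i>)) = (Im v * Re (v - \<i>) - Re v * Im (v - \<i>)) / N"
      unfolding N_def by (rule Im_divide)
    have i3: "Im v * Re (v - \<i>) - Re v * Im (v - \<i>) = Re v" by (simp add: algebra_simps)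
    have i4: "Im (v / (v - \<i>)) = s * Im (u / (of_real s * u - \<i>))"
      by (rule trans[OF i1 im])
    have i5: "Im (v / (v - \<i>)) = Re v / N" using i2 unfolding i3 .
    have "s * Im (u / (of_real s * u - \<i>)) = s * cos \<theta> / N"
      using i4 i5 vr(1) by simp
    then have "s * Im (u / (of_real s * u - \<i>)) = s * (cos \<theta> / N)" by (simp only: times_divide_eq_right)
    moreover have sn: "s \<noteq> 0" using sp by simp
    ultimately have e: "Im (u / (of_real s * u - \<i>)) = cos \<theta> / N" using mult_left_cancel by blast
    have n1: "N = (s * cos \<theta>)^2 + (s * sin \<theta> - 1)^2" unfolding N_def using vr by simp
    have n2: "(s * cos \<theta>)^2 + (s * sin \<theta> - 1)^2 = s^2 * ((cos \<theta>)^2 + (sin \<theta>)^2) - 2 * s * sin \<theta> + 1" by algebra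
    have Nq: "N = q s + 2 * s * cos \<theta>" unfolding q_def k_def n1 n2 by (simp add: algebra_simps)
    have d1: "q s / (s * N) = N / (s * N) - (2 * s * cos \<theta>) / (s * N)" 
      using Nq diff_divide_distrib[of N "2 * s * cos \<theta>" "s * N"] by simp
    have d2: "N / (s * N) = 1/s" using Np by simp
    have d3: "(2 * s * cos \<theta>) / (s * N) = 2 * (cos \<theta> / N)" using sp by simp
    have d4: "q s / (s * N) < 0" using qneg[OF that] sp Np by (intro divide_neg_pos) auto
    have "1/s - 2 * (cos \<theta> / N) < 0" using d1 d2 d3 d4 by linarith
    then show ?thesis using e by simp
  qed
  have "f 1 < f r"
  proof (rule DERIV_neg_imp_decreasing_open[OF rp(2)])
    fix s assume "r < s" "s < 1"
    then show "\<exists>y. DERIV f s :> y \<and> y < 0" using fd[of s] fneg[of s] rp by auto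
  next
    show "continuous_on {r..1} f"
    proof (rule continuous_at_imp_continuous_on, intro ballI)
      fix s assume "s \<in> {r..1}"
      then show "isCont f s" using fd[of s] rp DERIV_isCont by auto
    qed
  qed
  moreover have "f 1 = pi/2"
  proof -
    have lc: "Ln (u - \<i>) = of_real (ln (2 * sin (pi/4 - \<theta>/2))) - \<i> * of_real (pi/4 - \<theta>/2)"
      unfolding u_def using th by (intro Ln_circle) auto
    have "Im (Ln (u - \<i>)) = -(pi/4 - \<theta>/2)" unfolding lc by simp
    moreover have "f 1 = \<theta> - 2 * Im (Ln (u - \<i>))" by (simp add: f_def)
    ultimately show ?thesis by simp
  qed
  moreover have "f r = ln (cmod w) + Im (Ln w) - 2 * Im (Ln (w - \<i>))"
  proof -
    have "f r = ln r + \<theta> - 2 * Im (Ln (w - \<i>))" by (simp add: f_def wu)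
    then show ?thesis by (simp add: r_def \<theta>_def)
  qed
  ultimately show "pi/2 < ln (cmod w) + Im (Ln w) - 2 * Im (Ln (w - \<i>))" by simp
  have "Re (w - \<i>) > 0" using xp by (simp add: x_def)
  then have "\<bar>Im (Ln (w - \<i>))\<bar> < pi/2" by (rule Re_Ln_pos_lt_imp)
  moreover have "ln (cmod w) < 0" using rp by (simp add: r_def)
  ultimately show "ln (cmod w) + Im (Ln w) - 2 * Im (Ln (w - \<i>)) < 3*pi/2"
    using th by (simp add: \<theta>_def)
qed


lemma phi_open: "open (phi ` ball 0 1)"
  by (rule open_mapping_thm3[OF phi_holo open_ball phi_inj])

lemma phi_open_sub: "U \<subseteq> ball 0 1 \<Longrightarrow> open U \<Longrightarrow> open (phi ` U)"
  by (rule open_mapping_thm3) (auto intro: holomorphic_on_subset[OF phi_holo] inj_on_subset[OF phi_inj])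

lemma phi1_nz: "phi 1 \<noteq> 0" by (simp add: phi_zero)

lemma phi1_notin: assumes w0: "w0 \<in> ball 0 1" shows "phi w0 \<noteq> phi 1"
proof
  assume eq: "phi w0 = phi 1"
  have w01: "w0 \<noteq> 1" using w0 by auto
  define a where "a = cmod (1 - w0)"
  have ap: "a > 0" using w01 by (simp add: a_def)
  have a2: "a < 2"
  proof -
    have "a \<le> cmod 1 + cmod w0" unfolding a_def by (rule norm_triangle_ineq4)
    then show ?thesis using w0 by simp
  qed
  define d0 where "d0 = min (1 - cmod w0) (a/2)"
  have d0p: "d0 > 0" using w0 ap by (simp add: d0_def)
  have Usub: "ball w0 d0 \<subseteq> ball 0 1"
  proof
    fix x assume "x \<in> ball w0 d0"
    then have "cmod (x - w0) < 1 - cmod w0" by (simp add: dist_norm d0_def norm_minus_commute)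
    moreover have "cmod x \<le> cmod w0 + cmod (x - w0)" by (metis norm_triangle_ineq diff_add_cancel add.commute)
    ultimately show "x \<in> ball 0 1" by simp
  qed
  have "open (phi ` ball w0 d0)" by (rule phi_open_sub[OF Usub open_ball])
  moreover have "phi 1 \<in> phi ` ball w0 d0" using eq d0p by (metis centre_in_ball imageI)
  ultimately obtain \<eta> where \<eta>: "\<eta> > 0" "ball (phi 1) \<eta> \<subseteq> phi ` ball w0 d0"
    by (meson open_contains_ball)
  have "isCont phi 1" by (rule phi_cont) auto
  then obtain \<epsilon> where \<epsilon>: "\<epsilon> > 0" "\<And>y. dist y 1 < \<epsilon> \<Longrightarrow> dist (phi y) (phi 1) < \<eta>"
    using \<eta>(1) unfolding continuous_at_eps_delta by blast
  define s where "s = min (\<epsilon>/2) (a/4)"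
  have sp: "s > 0" "s < \<epsilon>" "s \<le> a/4" "s < 1" using \<epsilon> ap a2 by (auto simp: s_def)
  define y where "y = complex_of_real (1 - s)"
  have "cmod y = 1 - s" unfolding y_def norm_of_real using sp by simp
  then have yD: "y \<in> ball 0 1" using sp by simp
  have "dist y 1 < \<epsilon>" using sp by (simp add: y_def dist_norm)
  then have "dist (phi y) (phi 1) < \<eta>" using \<epsilon>(2) by blast
  then have "phi y \<in> ball (phi 1) \<eta>" by (simp add: dist_commute)
  then obtain v where v: "v \<in> ball w0 d0" "phi y = phi v" using \<eta>(2) by auto
  have "v = y" using inj_onD[OF phi_inj v(2)[symmetric]] v(1) Usub yD by auto
  then have "cmod (y - w0) < a/2" using v(1) by (simp add: dist_norm d0_def norm_minus_commute)
  moreover have "a \<le> cmod (1 - y) + cmod (y - w0)" unfolding a_def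
    by (metis diff_add_cancel norm_triangle_ineq add_diff_eq)
  moreover have "cmod (1 - y) = s" using sp by (simp add: y_def)
  ultimately show False using sp by simp
qed

definition M0 :: real where "M0 = cmod (phi 1)"
definition Kset :: "complex set" where "Kset = cball 0 1 \<inter> {w. 1/(1+M0) \<le> cmod (w - \<i>)}"
definition cc :: "real \<Rightarrow> complex" where "cc t = exp ((\<i>-1) * of_real t) * phi 1"

lemma M0_pos: "M0 > 0" by (simp add: M0_def phi1_nz)

lemma norm_cc: "cmod (cc t) = exp (-t) * M0"
  by (simp add: cc_def M0_def norm_mult)

lemma cc_cont: "continuous_on S cc"
  unfolding cc_def by (intro continuous_intros)

lemma Kset_compact: "compact Kset"
proof -
  have "closed {w. 1/(1+M0) \<le> cmod (w - \<i>)}"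
    by (intro closed_Collect_le continuous_intros)
  then show ?thesis unfolding Kset_def by (intro compact_Int_closed) auto
qed

lemma Kset_noti: "w \<in> Kset \<Longrightarrow> w \<noteq> \<i>"
  using M0_pos by (auto simp: Kset_def)

lemma phiK_compact: "compact (phi ` Kset)"
proof (rule compact_continuous_image[OF _ Kset_compact])
  show "continuous_on Kset phi"
    by (rule continuous_at_imp_continuous_on) (auto intro!: phi_cont Kset_noti simp: Kset_def)
qed

lemma inK: assumes "cmod w \<le> 1" "w \<noteq> \<i>" "cmod (phi w) \<le> M0" shows "w \<in> Kset"
  using far_from_i[OF assms] assms(1) by (simp add: Kset_def)

lemma cc_in_image: assumes "t > 0" shows "cc t \<in> phi ` ball 0 1"
proof -
  define A where "A = {0<..} \<inter> cc -` (phi ` ball 0 1)"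
  have A2: "A = {0<..} \<inter> cc -` (phi ` Kset)"
  proof (intro set_eqI iffI)
    fix t assume "t \<in> A"
    then obtain w where w: "t > 0" "w \<in> ball 0 1" "cc t = phi w" by (auto simp: A_def)
    have "cmod (phi w) \<le> M0" using w norm_cc[of t] M0_pos by (simp add: mult_left_le_one_le)
    then have "w \<in> Kset" using w by (intro inK) auto
    then show "t \<in> {0<..} \<inter> cc -` (phi ` Kset)" using w by auto
  next
    fix t assume "t \<in> {0<..} \<inter> cc -` (phi ` Kset)"
    then obtain w where w: "t > 0" "w \<in> Kset" "cc t = phi w" by auto
    have wi: "w \<noteq> \<i>" using Kset_noti w by blast
    have "cmod w < 1"
    proof (rule ccontr)
      assume "\<not> cmod w < 1"
      then have "cmod w = 1" using w by (auto simp: Kset_def)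
      then have "M0 \<le> cmod (phi w)" using boundary_phi(1)[OF _ wi] by (simp add: M0_def)
      also have "\<dots> = exp (-t) * M0" using w norm_cc by metis
      also have "\<dots> < M0" using w M0_pos by simp
      finally show False by simp
    qed
    then show "t \<in> A" using w by (auto simp: A_def)
  qed
  have op: "openin (top_of_set {0<..}) A"
    unfolding A_def by (intro open_subset continuous_open_preimage cc_cont phi_open) auto
  have cl: "closedin (top_of_set {0<..}) A"
    unfolding A2 by (intro continuous_closedin_preimage cc_cont compact_imp_closed phiK_compact)
  have ne: "A \<noteq> {}"
  proof -
    have "0 \<in> phi ` ball 0 1" using phi_zero by (metis centre_in_ball imageI zero_less_one)
    then obtain \<eta> where \<eta>: "\<eta> > 0" "ball 0 \<eta> \<subseteq> phi ` ball 0 1"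
      using phi_open by (meson open_contains_ball)
    define t where "t = \<bar>ln (M0 / \<eta>)\<bar> + 1"
    have tp: "t > 0" by (simp add: t_def)
    have "ln (M0 / \<eta>) < t" by (simp add: t_def)
    then have "M0 / \<eta> < exp t" using M0_pos \<eta> by (metis exp_less_cancel_iff exp_ln divide_pos_pos)
    then have "M0 < \<eta> * exp t" using \<eta> by (simp add: divide_less_eq mult.commute)
    then have "M0 / exp t < \<eta>" by (simp add: divide_less_eq)
    then have "exp (-t) * M0 < \<eta>" by (simp add: exp_minus divide_inverse mult.commute)
    then have "cc t \<in> ball 0 \<eta>" by (simp add: norm_cc)
    then have "cc t \<in> phi ` ball 0 1" using \<eta> by blast
    then have "t \<in> A" using tp by (simp add: A_def)
    then show ?thesis by blast
  qed
  have "connected {0::real<..}" by (simp add: is_interval_connected)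
  then have "A = {0<..}" using op cl ne unfolding connected_clopen by blast
  then show ?thesis using assms by (auto simp: A_def)
qed


lemma alg1: assumes "w \<noteq> 1" "w \<noteq> \<i>" "X \<noteq> 0"
  shows "(\<i>-1)*(1 + 0 - ((\<i>-1)*(w*X)/(X*(1 + (\<i>-1)*w/(w-\<i>))))/(w-\<i>)) = (\<i>-1) + 2*w/(w-1)"
proof -
  have a: "w - \<i> \<noteq> 0" "w - 1 \<noteq> 0" using assms by auto
  have b: "1 + (\<i>-1)*w/(w-\<i>) = \<i>*(w-1)/(w-\<i>)"
    using a by (simp add: divide_simps) (simp add: algebra_simps)
  have "(\<i>-1)*(w*X)/(X*(\<i>*(w-1)/(w-\<i>))) = (\<i>-1)*w*(w-\<i>)/(\<i>*(w-1))"
    using a assms(3) by (simp add: divide_simps)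
  then have "(\<i>-1)*(1 + 0 - ((\<i>-1)*(w*X)/(X*(1 + (\<i>-1)*w/(w-\<i>))))/(w-\<i>)) = (\<i>-1)*(1 - (\<i>-1)*w/(\<i>*(w-1)))"
    unfolding b using a by simp
  also have "\<dots> = (\<i>-1) + 2*w/(w-1)"
    using a by (simp add: divide_simps) (simp add: algebra_simps)
  finally show ?thesis .
qed

lemma frac1: "(N::real) \<noteq> 0 \<Longrightarrow> -1 + X/N = (X - N)/N" by (simp add: diff_divide_distrib)
lemma frac2: "(N::real) \<noteq> 0 \<Longrightarrow> 1 + X/N = (N + X)/N" by (simp add: add_divide_distrib)

lemma Re_Ep: assumes "cmod w < 1" shows "Re ((\<i>-1) + 2*w/(w-1)) < 0"
proof -
  have w1: "w \<noteq> 1" using assms by auto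
  have n2: "(Re w)^2 + (Im w)^2 < 1" using assms
    by (metis cmod_power2 norm_ge_zero power_strict_mono one_power2 zero_less_numeral)
  have N: "(Re w - 1)^2 + (Im w)^2 > 0" using w1 by (simp add: complex_eq_iff add_pos_pos sum_power2_gt_zero_iff)
  have "Re ((\<i>-1) + 2*w/(w-1)) = -1 + 2 * ((Re w)^2 - Re w + (Im w)^2) / ((Re w - 1)^2 + (Im w)^2)"
    by (simp add: Re_divide power2_eq_square algebra_simps)
  also have "\<dots> = (2 * ((Re w)^2 - Re w + (Im w)^2) - ((Re w - 1)^2 + (Im w)^2)) / ((Re w - 1)^2 + (Im w)^2)"
    by (rule frac1) (use N in linarith)
  also have "\<dots> = ((Re w)^2 + (Im w)^2 - 1) / ((Re w - 1)^2 + (Im w)^2)"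
    by (simp add: power2_eq_square algebra_simps)
  also have "\<dots> < 0" by (rule divide_neg_pos) (use n2 N in linarith)+
  finally show ?thesis .
qed

lemma Im_Ep: assumes "w \<noteq> 1" "(Re w - 1)^2 + (Im w - 1)^2 > 1" shows "Im ((\<i>-1) + 2*w/(w-1)) > 0"
proof -
  have N: "(Re w - 1)^2 + (Im w)^2 > 0" using assms(1) by (simp add: complex_eq_iff sum_power2_gt_zero_iff)
  have "Im ((\<i>-1) + 2*w/(w-1)) = 1 + 2 * (- Im w) / ((Re w - 1)^2 + (Im w)^2)"
    by (simp add: Im_divide power2_eq_square algebra_simps)
  also have "\<dots> = (((Re w - 1)^2 + (Im w)^2) + 2 * (- Im w)) / ((Re w - 1)^2 + (Im w)^2)"
    by (rule frac2) (use N in linarith)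
  also have "\<dots> = ((Re w - 1)^2 + (Im w - 1)^2 - 1) / ((Re w - 1)^2 + (Im w)^2)"
    by (simp add: power2_eq_square algebra_simps)
  also have "\<dots> > 0" by (rule divide_pos_pos) (use assms N in linarith)+
  finally show ?thesis .
qed

lemma gamma_pos: assumes "t > 0" shows "gamma t \<in> ball 0 1" "phi (gamma t) = cc t"
proof -
  have g: "gamma t = inv_into (ball 0 1) phi (cc t)" using assms by (simp add: gamma_def cc_def)
  show "gamma t \<in> ball 0 1" unfolding g by (rule inv_into_into[OF cc_in_image[OF assms]])
  show "phi (gamma t) = cc t" unfolding g by (rule f_inv_into_f[OF cc_in_image[OF assms]])
qed

lemma gamma0: "gamma 0 = 1" by (simp add: gamma_def)

lemma gamma_near0: "(gamma \<longlongrightarrow> 1) (at_right 0)"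
proof (rule tendstoI)
  fix \<epsilon> :: real assume ep: "\<epsilon> > 0"
  define K where "K = Kset \<inter> {w. \<epsilon> \<le> dist w 1}"
  have cK: "compact K" unfolding K_def
    by (intro compact_Int_closed Kset_compact closed_Collect_le continuous_intros)
  have "continuous_on K phi"
    by (rule continuous_at_imp_continuous_on) (auto intro!: phi_cont Kset_noti simp: Kset_def K_def)
  then have "compact (phi ` K)" using cK by (rule compact_continuous_image)
  then have clK: "closed (phi ` K)" by (rule compact_imp_closed)
  have notin: "phi 1 \<notin> phi ` K"
  proof
    assume "phi 1 \<in> phi ` K"
    then obtain w where w: "w \<in> K" "phi w = phi 1" by auto
    have wi: "w \<noteq> \<i>" using w Kset_noti by (auto simp: K_def)
    have wc: "cmod w \<le> 1" using w by (auto simp: K_def Kset_def)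
    show False
    proof (cases "cmod w < 1")
      case True then show False using phi1_notin w(2) by simp
    next
      case False
      then have "cmod w = 1" using wc by simp
      then have "w = 1" using boundary_phi(2)[OF _ wi] w(2) by simp
      then show False using w ep by (simp add: K_def)
    qed
  qed
  obtain \<delta> where \<delta>: "\<delta> > 0" "\<And>x. x \<in> phi ` K \<Longrightarrow> \<delta> \<le> dist (phi 1) x"
    using separate_point_closed[OF clK notin] by blast
  have "isCont cc 0" using cc_cont[of UNIV] by (simp add: continuous_on_eq_continuous_at)
  then have "(cc \<longlongrightarrow> cc 0) (at 0)" by (simp add: isCont_def)
  then have "(cc \<longlongrightarrow> cc 0) (at_right 0)"
    by (rule tendsto_within_subset) simp
  moreover have "cc 0 = phi 1" by (simp add: cc_def)
  ultimately have "(cc \<longlongrightarrow> phi 1) (at_right 0)" by simp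
  then have ev1: "eventually (\<lambda>t. dist (cc t) (phi 1) < \<delta>) (at_right 0)"
    using \<delta>(1) by (rule tendstoD)
  have ev2: "eventually (\<lambda>t. t > (0::real)) (at_right 0)"
    by (simp add: eventually_at_right_less)
  show "eventually (\<lambda>t. dist (gamma t) 1 < \<epsilon>) (at_right 0)"
    using ev1 ev2
  proof eventually_elim
    case (elim t)
    have wD: "gamma t \<in> ball 0 1" and pw: "phi (gamma t) = cc t" using gamma_pos elim by auto
    have "cmod (phi (gamma t)) \<le> M0" using pw norm_cc[of t] M0_pos elim by (simp add: mult_left_le_one_le)
    then have wK: "gamma t \<in> Kset" using wD by (intro inK) auto
    show ?case
    proof (rule ccontr)
      assume "\<not> dist (gamma t) 1 < \<epsilon>"
      then have "gamma t \<in> K" using wK by (simp add: K_def)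
      then have "\<delta> \<le> dist (phi 1) (cc t)" using \<delta>(2) pw by (metis imageI)
      then show False using elim by (simp add: dist_commute)
    qed
  qed
qed

lemma phi_inverse: obtains g where "g holomorphic_on (phi ` ball 0 1)"
  "\<And>z. z \<in> ball 0 1 \<Longrightarrow> deriv phi z * deriv g (phi z) = 1"
  "\<And>z. z \<in> ball 0 1 \<Longrightarrow> g (phi z) = z"
  using holomorphic_has_inverse[OF phi_holo open_ball phi_inj] by blast

lemma cc_vd: "(cc has_vector_derivative (\<i>-1) * cc t) (at t)"
proof -
  have "((\<lambda>z. exp ((\<i>-1) * z) * phi 1) has_field_derivative exp ((\<i>-1) * of_real t) * ((\<i>-1) * 1) * phi 1) (at (of_real t))"
    by (rule derivative_eq_intros refl | simp)+
  then have "((\<lambda>x. exp ((\<i>-1) * of_real x) * phi 1) has_vector_derivative exp ((\<i>-1) * of_real t) * ((\<i>-1) * 1) * phi 1) (at t)"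
    by (rule has_vector_derivative_real_field)
  then show ?thesis unfolding cc_def[abs_def] by (simp add: mult_ac)
qed

definition dphi :: "complex \<Rightarrow> complex" where
  "dphi z = exp((\<i>-1)*Ln(z-\<i>)) * (1 + (\<i>-1)*z/(z-\<i>))"

lemma gamma_vd: assumes "t > 0"
  shows "(gamma has_vector_derivative ((\<i>-1) * cc t) / dphi (gamma t)) (at t)"
proof -
  obtain g where g: "g holomorphic_on (phi ` ball 0 1)"
    "\<And>z. z \<in> ball 0 1 \<Longrightarrow> deriv phi z * deriv g (phi z) = 1"
    "\<And>z. z \<in> ball 0 1 \<Longrightarrow> g (phi z) = z"
    using phi_inverse by blast
  define w where "w = gamma t"
  have wD: "w \<in> ball 0 1" and pw: "phi w = cc t" using gamma_pos assms by (auto simp: w_def)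
  have dp: "deriv phi w = dphi w"
    unfolding dphi_def by (rule DERIV_imp_deriv[OF phi_deriv[OF notnp[OF wD]]])
  have gd: "(g has_field_derivative deriv g (cc t)) (at (cc t))"
    using g(1) phi_open cc_in_image[OF assms] by (rule holomorphic_derivI)
  have "((g \<circ> cc) has_vector_derivative ((\<i>-1) * cc t) * deriv g (cc t)) (at t)"
    using cc_vd gd by (rule field_vector_diff_chain_at)
  moreover have "deriv g (cc t) = 1 / dphi w" using g(2)[OF wD] pw dp
    by (metis nonzero_eq_divide_eq mult.commute mult_zero_left zero_neq_one)
  ultimately have "((g \<circ> cc) has_vector_derivative ((\<i>-1) * cc t) / dphi (gamma t)) (at t)"
    by (simp add: w_def)
  then show ?thesis
  proof (rule has_vector_derivative_transform_within_open)
    show "open {0::real<..}" by simp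
    show "t \<in> {0<..}" using assms by simp
    fix y :: real assume "y \<in> {0<..}"
    then have "y > 0" by simp
    then show "(g \<circ> cc) y = gamma y" using gamma_pos[of y] g(3) by (metis comp_apply)
  qed
qed

lemma gamma_cont: "continuous_on {0..} gamma"
proof (clarsimp simp: continuous_on_eq_continuous_within)
  fix t :: real assume t: "0 \<le> t"
  show "continuous (at t within {0..}) gamma"
  proof (cases "t = 0")
    case True
    then show ?thesis using gamma_near0 gamma0
      by (simp add: continuous_within at_within_Ici_at_right)
  next
    case False
    then have "t > 0" using t by simp
    then show ?thesis using gamma_vd has_vector_derivative_continuous continuous_at_imp_continuous_within
      by blast
  qed
qed

lemma gamma_in: "t \<ge> 0 \<Longrightarrow> cmod (gamma t) \<le> 1 \<and> gamma t \<noteq> \<i>"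
  using gamma_pos[of t] gamma0 by (cases "t = 0") (auto simp: less_le)

lemma gamma_np: "t \<ge> 0 \<Longrightarrow> gamma t - \<i> \<notin> \<real>\<^sub>\<le>\<^sub>0"
  using gamma_in notnp2 by blast


definition Ef :: "real \<Rightarrow> complex" where
  "Ef t = (\<i>-1) * (of_real t + Ln (1 - \<i>) - Ln (gamma t - \<i>))"

lemma Ef0: "Ef 0 = 0" by (simp add: Ef_def gamma0)

lemma gamma_exp: assumes "t \<ge> 0" shows "gamma t = exp (Ef t)"
proof (cases "t = 0")
  case True then show ?thesis by (simp add: Ef0 gamma0)
next
  case False
  then have tp: "t > 0" using assms by simp
  define w where "w = gamma t"
  have pw: "phi w = cc t" using gamma_pos tp by (simp add: w_def)
  define X where "X = exp ((\<i>-1) * Ln (w - \<i>))"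
  have Xnz: "X \<noteq> 0" by (simp add: X_def)
  have "w * X = exp ((\<i>-1) * of_real t) * exp ((\<i>-1) * Ln (1 - \<i>))"
    using pw by (simp add: phi_def cc_def X_def)
  then have "w = exp ((\<i>-1) * of_real t) * exp ((\<i>-1) * Ln (1 - \<i>)) / X"
    using Xnz by (simp add: eq_divide_eq)
  also have "\<dots> = exp ((\<i>-1) * of_real t + (\<i>-1) * Ln (1 - \<i>) - (\<i>-1) * Ln (w - \<i>))"
    by (simp add: exp_add exp_diff X_def)
  also have "(\<i>-1) * of_real t + (\<i>-1) * Ln (1 - \<i>) - (\<i>-1) * Ln (w - \<i>) = Ef t"
    by (simp add: Ef_def w_def algebra_simps)
  finally show ?thesis by (simp add: w_def)
qed

lemma Ef_cont: "continuous_on {0..} Ef"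
  unfolding Ef_def by (intro continuous_intros gamma_cont) (use gamma_np in auto)

lemma Ef_vd: assumes tp: "t > 0"
  shows "(Ef has_vector_derivative (\<i>-1) + 2 * gamma t / (gamma t - 1)) (at t)"
proof -
  define w where "w = gamma t"
  have wD: "w \<in> ball 0 1" and pw: "phi w = cc t" using gamma_pos tp by (auto simp: w_def)
  have w1: "w \<noteq> 1" "w \<noteq> \<i>" using wD by auto
  have np: "w - \<i> \<notin> \<real>\<^sub>\<le>\<^sub>0" using notnp[OF wD] .
  define X where "X = exp ((\<i>-1) * Ln (w - \<i>))"
  have Xnz: "X \<noteq> 0" by (simp add: X_def)
  define w' where "w' = ((\<i>-1) * cc t) / dphi w"
  have gv: "(gamma has_vector_derivative w') (at t)" using gamma_vd[OF tp] by (simp add: w'_def w_def)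
  have gv2: "((\<lambda>t. gamma t - \<i>) has_vector_derivative w' - 0) (at t)"
    by (intro has_vector_derivative_diff gv has_vector_derivative_const)
  have "((Ln \<circ> (\<lambda>t. gamma t - \<i>)) has_vector_derivative (w' - 0) * inverse (gamma t - \<i>)) (at t)"
    using gv2 has_field_derivative_Ln[OF np[unfolded w_def]] by (rule field_vector_diff_chain_at)
  then have lv: "((\<lambda>t. Ln (gamma t - \<i>)) has_vector_derivative w' / (w - \<i>)) (at t)"
    by (simp add: o_def w_def divide_inverse)
  have ov: "((\<lambda>t. complex_of_real t) has_vector_derivative 1) (at t)"
    using has_vector_derivative_of_real[OF DERIV_ident] by simp
  have "((\<lambda>t. (\<i>-1) * (of_real t + Ln (1 - \<i>) - Ln (gamma t - \<i>))) has_vector_derivative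
        (\<i>-1) * (1 + 0 - w' / (w - \<i>))) (at t)"
    by (intro has_vector_derivative_mult_right has_vector_derivative_diff has_vector_derivative_add ov lv has_vector_derivative_const)
  moreover have "(\<i>-1) * (1 + 0 - w' / (w - \<i>)) = (\<i>-1) + 2 * w / (w - 1)"
  proof -
    have "cc t = w * X" using pw by (simp add: phi_def X_def)
    moreover have "dphi w = X * (1 + (\<i>-1)*w/(w-\<i>))" by (simp add: dphi_def X_def)
    ultimately have "w' = (\<i>-1)*(w*X)/(X*(1 + (\<i>-1)*w/(w-\<i>)))" by (simp add: w'_def)
    then show ?thesis using alg1[OF w1 Xnz] by simp
  qed
  ultimately show ?thesis unfolding Ef_def[abs_def] by (simp add: w_def)
qed

lemma Ln1mi_parts: "Re (Ln (1 - \<i>)) = ln (sqrt 2)" "Im (Ln (1 - \<i>)) = - (pi/4)"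
  by (simp_all add: Ln_1mi)

lemma ReIm_Ef: assumes "t \<ge> 0"
  shows "Re (Ef t) = - t - ln (sqrt 2) + ln (cmod (gamma t - \<i>)) + pi/4 + Im (Ln (gamma t - \<i>))"
    and "Im (Ef t) = t + ln (sqrt 2) - ln (cmod (gamma t - \<i>)) + pi/4 + Im (Ln (gamma t - \<i>))"
proof -
  have nz: "gamma t - \<i> \<noteq> 0" using gamma_in[OF assms] by simp
  show "Re (Ef t) = - t - ln (sqrt 2) + ln (cmod (gamma t - \<i>)) + pi/4 + Im (Ln (gamma t - \<i>))"
    using nz by (simp add: Ef_def Ln1mi_parts algebra_simps)
  show "Im (Ef t) = t + ln (sqrt 2) - ln (cmod (gamma t - \<i>)) + pi/4 + Im (Ln (gamma t - \<i>))"
    using nz by (simp add: Ef_def Ln1mi_parts algebra_simps)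
qed

lemma rho_bounds: assumes "t \<ge> 0" shows "0 < cmod (gamma t - \<i>)" "cmod (gamma t - \<i>) \<le> 2"
proof -
  show "0 < cmod (gamma t - \<i>)" using gamma_in[OF assms] by simp
  have "cmod (gamma t - \<i>) \<le> cmod (gamma t) + cmod \<i>" by (rule norm_triangle_ineq4)
  then show "cmod (gamma t - \<i>) \<le> 2" using gamma_in[OF assms] by simp
qed

lemma ReEf_bound: assumes "t \<ge> 0" shows "Re (Ef t) \<le> - t + (ln 2 - ln (sqrt 2) + pi/4 + pi)"
proof -
  have nz: "gamma t - \<i> \<noteq> 0" using gamma_in[OF assms] by simp
  have "ln (cmod (gamma t - \<i>)) \<le> ln 2" using rho_bounds[OF assms] by simp
  moreover have "Im (Ln (gamma t - \<i>)) \<le> pi" using Im_Ln_le_pi[OF nz] .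
  ultimately show ?thesis using ReIm_Ef(1)[OF assms] by linarith
qed

lemma ImEf_bound: assumes "t \<ge> 0" shows "Im (Ef t) \<ge> t + (ln (sqrt 2) - ln 2 + pi/4 - pi)"
proof -
  have nz: "gamma t - \<i> \<noteq> 0" using gamma_in[OF assms] by simp
  have "ln (cmod (gamma t - \<i>)) \<le> ln 2" using rho_bounds[OF assms] by simp
  moreover have "-pi < Im (Ln (gamma t - \<i>))" using mpi_less_Im_Ln[OF nz] .
  ultimately show ?thesis using ReIm_Ef(2)[OF assms] by linarith
qed

lemma lens_excl: assumes tp: "t > 0" shows "(Re (gamma t) - 1)^2 + (Im (gamma t) - 1)^2 > 1"
proof (rule ccontr)
  assume "\<not> ?thesis"
  then have L: "(Re (gamma t) - 1)^2 + (Im (gamma t) - 1)^2 \<le> 1" by simp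
  define w where "w = gamma t"
  have wD: "w \<in> ball 0 1" using gamma_pos tp by (simp add: w_def)
  have we: "w = exp (Ef t)" using gamma_exp tp by (simp add: w_def)
  have wnz: "w \<noteq> 0" using we by simp
  have l1: "ln (cmod w) = Re (Ef t)" using we by simp
  have "exp (Ln w) = exp (Ef t)" using wnz we by simp
  then obtain n :: int where n: "Ln w = Ef t + of_int (2 * n) * pi * \<i>" using exp_eq by blast
  then have l2: "Im (Ln w) = Im (Ef t) + 2 * n * pi" by simp
  have "Re (Ef t) + Im (Ef t) = pi/2 + 2 * Im (Ln (w - \<i>))"
    using ReIm_Ef[of t] tp by (simp add: w_def)
  then have F: "ln (cmod w) + Im (Ln w) - 2 * Im (Ln (w - \<i>)) = pi/2 + 2 * n * pi"
    using l1 l2 by simp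
  have L': "(Re w - 1)^2 + (Im w - 1)^2 \<le> 1" using L by (simp add: w_def)
  have a: "pi/2 < pi/2 + 2 * n * pi" "pi/2 + 2 * n * pi < 3*pi/2"
    using lens[OF wD L'] F by linarith+
  from a(1) have "0 < real_of_int n" by (simp add: zero_less_mult_iff)
  then have "1 \<le> real_of_int n" by simp
  then have "2 * pi \<le> 2 * n * pi" by simp
  with a(2) show False by simp
qed

lemma ReEf_deriv: assumes "t > 0"
  shows "\<exists>y. ((\<lambda>x. Re (Ef x)) has_real_derivative y) (at t) \<and> y < 0"
proof -
  have "cmod (gamma t) < 1" using gamma_pos assms by simp
  then show ?thesis using vd_Re[OF Ef_vd[OF assms]] Re_Ep by blast
qed

lemma ImEf_deriv: assumes "t > 0"
  shows "((\<lambda>x. Im (Ef x)) has_real_derivative Im ((\<i>-1) + 2 * gamma t / (gamma t - 1))) (at t)"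
    and "Im ((\<i>-1) + 2 * gamma t / (gamma t - 1)) > 0"
proof -
  show "((\<lambda>x. Im (Ef x)) has_real_derivative Im ((\<i>-1) + 2 * gamma t / (gamma t - 1))) (at t)"
    using vd_Im[OF Ef_vd[OF assms]] .
  have "gamma t \<noteq> 1"
  proof
    assume "gamma t = 1"
    with gamma_pos(1)[OF assms] show False by simp
  qed
  then show "Im ((\<i>-1) + 2 * gamma t / (gamma t - 1)) > 0" using Im_Ep lens_excl[OF assms] by blast
qed


lemma int_valued_const:
  fixes h :: "real \<Rightarrow> real"
  assumes "continuous_on {0..} h" "\<And>t. t \<ge> 0 \<Longrightarrow> h t \<in> \<int>" "h 0 = 0"
  shows "\<And>t. t \<ge> 0 \<Longrightarrow> h t = 0"
proof -
  have "h constant_on {0..}"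
  proof (rule continuous_discrete_range_constant)
    show "connected {0::real..}" by (simp add: is_interval_connected)
    show "continuous_on {0..} h" by fact
    fix x assume x: "x \<in> {0::real..}"
    show "\<exists>e>0. \<forall>y. y \<in> {0..} \<and> h y \<noteq> h x \<longrightarrow> e \<le> norm (h y - h x)"
    proof (intro exI[of _ 1] conjI allI impI)
      fix y assume y: "y \<in> {0..} \<and> h y \<noteq> h x"
      obtain m where m: "h y = of_int m" using assms(2) y by (auto elim: Ints_cases)
      obtain n where n: "h x = of_int n" using assms(2) x by (auto elim: Ints_cases)
      have "m \<noteq> n" using y m n by auto
      then have "1 \<le> \<bar>m - n\<bar>" by simp
      then show "1 \<le> norm (h y - h x)" using m n by (simp flip: of_int_diff)
    qed simp
  qed
  then obtain c where c: "\<And>t. t \<in> {0..} \<Longrightarrow> h t = c" unfolding constant_on_def by blast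
  have "c = 0" using c[of 0] assms(3) by simp
  then show "\<And>t. t \<ge> 0 \<Longrightarrow> h t = 0" using c by simp
qed

theorem proposition3p1:
  fixes r :: "real \<Rightarrow> real"
  defines "r \<equiv> (\<lambda>t. cmod (gamma t))"
  shows "(\<exists>\<Theta>. continuous_on {0..} \<Theta> \<and> \<Theta> 0 = 0 \<and>
            (\<forall>t\<ge>0. gamma t = complex_of_real (r t) * exp (\<i> * complex_of_real (\<Theta> t))))
      \<and> (\<forall>s t. 0 \<le> s \<longrightarrow> s < t \<longrightarrow> r t < r s)
      \<and> (r \<longlongrightarrow> 0) at_top
      \<and> (\<forall>\<Theta>. continuous_on {0..} \<Theta> \<and> \<Theta> 0 = 0 \<and>
            (\<forall>t\<ge>0. gamma t = complex_of_real (r t) * exp (\<i> * complex_of_real (\<Theta> t)))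
          \<longrightarrow> (\<forall>s t. 0 \<le> s \<longrightarrow> s < t \<longrightarrow> \<Theta> s < \<Theta> t)
            \<and> (\<forall>t>0. \<exists>d>0. (\<Theta> has_real_derivative d) (at t))
            \<and> filterlim \<Theta> at_top at_top)"
proof -
  have rE: "r t = exp (Re (Ef t))" if "t \<ge> 0" for t
    using gamma_exp[OF that] by (simp add: r_def)
  have polar: "gamma t = complex_of_real (r t) * exp (\<i> * complex_of_real (Im (Ef t)))" if "t \<ge> 0" for t
  proof -
    have e: "Ef t = complex_of_real (Re (Ef t)) + \<i> * complex_of_real (Im (Ef t))" by (simp add: complex_eq_iff)
    have "exp (Ef t) = exp (complex_of_real (Re (Ef t))) * exp (\<i> * complex_of_real (Im (Ef t)))"
      by (subst e) (rule exp_add)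
    also have "exp (complex_of_real (Re (Ef t))) = complex_of_real (r t)"
      using rE[OF that] by (simp add: exp_of_real)
    finally show ?thesis using gamma_exp[OF that] by simp
  qed
  have ImE_cont: "continuous_on {0..} (\<lambda>t. Im (Ef t))" by (intro continuous_intros Ef_cont)
  have ReE_cont: "continuous_on {0..} (\<lambda>t. Re (Ef t))" by (intro continuous_intros Ef_cont)
  have part1: "\<exists>\<Theta>. continuous_on {0..} \<Theta> \<and> \<Theta> 0 = 0 \<and>
            (\<forall>t\<ge>0. gamma t = complex_of_real (r t) * exp (\<i> * complex_of_real (\<Theta> t)))"
    using ImE_cont polar Ef0 by (intro exI[of _ "\<lambda>t. Im (Ef t)"]) simp
  have part2: "\<forall>s t. 0 \<le> s \<longrightarrow> s < t \<longrightarrow> r t < r s"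
  proof (intro allI impI)
    fix s t :: real assume st: "0 \<le> s" "s < t"
    have "Re (Ef t) < Re (Ef s)"
    proof (rule DERIV_neg_imp_decreasing_open[OF st(2)])
      fix x assume "s < x" "x < t"
      then show "\<exists>y. ((\<lambda>x. Re (Ef x)) has_real_derivative y) (at x) \<and> y < 0"
        using ReEf_deriv st by auto
    next
      show "continuous_on {s..t} (\<lambda>x. Re (Ef x))"
        using ReE_cont by (rule continuous_on_subset) (use st in auto)
    qed
    then show "r t < r s" using rE st by simp
  qed
  define C1 where "C1 = ln 2 - ln (sqrt 2) + pi/4 + pi"
  have part3: "(r \<longlongrightarrow> 0) at_top"
  proof (rule tendstoI)
    fix \<epsilon> :: real assume ep: "\<epsilon> > 0"
    show "eventually (\<lambda>t. dist (r t) 0 < \<epsilon>) at_top"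
      unfolding eventually_at_top_linorder
    proof (intro exI[of _ "max 0 (C1 - ln \<epsilon> + 1)"] allI impI)
      fix t assume t: "t \<ge> max 0 (C1 - ln \<epsilon> + 1)"
      then have t0: "t \<ge> 0" by simp
      have "Re (Ef t) \<le> - t + C1" using ReEf_bound[OF t0] by (simp add: C1_def)
      also have "\<dots> < ln \<epsilon>" using t by simp
      finally have "exp (Re (Ef t)) < \<epsilon>" using ep by (metis exp_less_cancel_iff exp_ln)
      then show "dist (r t) 0 < \<epsilon>" using rE[OF t0] by simp
    qed
  qed
  have part4: "(\<forall>s t. 0 \<le> s \<longrightarrow> s < t \<longrightarrow> \<Theta> s < \<Theta> t)
            \<and> (\<forall>t>0. \<exists>d>0. (\<Theta> has_real_derivative d) (at t))
            \<and> filterlim \<Theta> at_top at_top"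
    if Th: "continuous_on {0..} \<Theta>" "\<Theta> 0 = 0"
      "\<forall>t\<ge>0. gamma t = complex_of_real (r t) * exp (\<i> * complex_of_real (\<Theta> t))" for \<Theta>
  proof -
    define h where "h t = (\<Theta> t - Im (Ef t)) / (2 * pi)" for t
    have hc: "continuous_on {0..} h" unfolding h_def[abs_def]
      by (intro continuous_intros Th(1) ImE_cont) simp
    have hI: "h t \<in> \<int>" if t: "t \<ge> 0" for t
    proof -
      have rp: "r t > 0" using rE[OF t] by simp
      have "complex_of_real (r t) * exp (\<i> * complex_of_real (\<Theta> t)) =
            complex_of_real (r t) * exp (\<i> * complex_of_real (Im (Ef t)))"
        using Th(3) polar t by metis
      then have "exp (\<i> * complex_of_real (\<Theta> t)) = exp (\<i> * complex_of_real (Im (Ef t)))"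
        using rp by simp
      then obtain n :: int where "\<i> * complex_of_real (\<Theta> t) = \<i> * complex_of_real (Im (Ef t)) + of_int (2 * n) * pi * \<i>"
        using exp_eq by blast
      then have "\<Theta> t = Im (Ef t) + 2 * n * pi" by (simp add: complex_eq_iff)
      then have "h t = of_int n" by (simp add: h_def)
      then show ?thesis by simp
    qed
    have h0: "h 0 = 0" using Th(2) Ef0 by (simp add: h_def)
    have ThE: "\<Theta> t = Im (Ef t)" if "t \<ge> 0" for t
      using int_valued_const[OF hc hI h0 that] by (simp add: h_def)
    have inc: "\<forall>s t. 0 \<le> s \<longrightarrow> s < t \<longrightarrow> \<Theta> s < \<Theta> t"
    proof (intro allI impI)
      fix s t :: real assume st: "0 \<le> s" "s < t"
      have "Im (Ef s) < Im (Ef t)"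
      proof (rule DERIV_pos_imp_increasing_open[OF st(2)])
        fix x assume "s < x" "x < t"
        then have "x > 0" using st by simp
        then show "\<exists>y. ((\<lambda>x. Im (Ef x)) has_real_derivative y) (at x) \<and> y > 0"
          using ImEf_deriv by blast
      next
        show "continuous_on {s..t} (\<lambda>x. Im (Ef x))"
          using ImE_cont by (rule continuous_on_subset) (use st in auto)
      qed
      then show "\<Theta> s < \<Theta> t" using ThE st by simp
    qed
    have der: "\<forall>t>0. \<exists>d>0. (\<Theta> has_real_derivative d) (at t)"
    proof (intro allI impI)
      fix t :: real assume tp: "t > 0"
      have "(\<Theta> has_real_derivative Im ((\<i>-1) + 2 * gamma t / (gamma t - 1))) (at t)"
      proof (rule has_field_derivative_transform_within_open[OF ImEf_deriv(1)[OF tp]])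
        show "open {0::real<..}" by simp
        show "t \<in> {0<..}" using tp by simp
        fix x :: real assume "x \<in> {0<..}"
        then show "Im (Ef x) = \<Theta> x" using ThE by simp
      qed
      then show "\<exists>d>0. (\<Theta> has_real_derivative d) (at t)" using ImEf_deriv(2)[OF tp] by blast
    qed
    define C2 where "C2 = ln (sqrt 2) - ln 2 + pi/4 - pi"
    have lim: "filterlim \<Theta> at_top at_top"
    proof (rule filterlim_at_top_mono)
      show "LIM x at_top. C2 + x :> at_top"
        by (rule filterlim_tendsto_add_at_top[OF tendsto_const filterlim_ident])
      show "eventually (\<lambda>x. C2 + x \<le> \<Theta> x) at_top"
        using eventually_ge_at_top[of 0]
      proof eventually_elim
        case (elim x)
        then show ?case using ImEf_bound[of x] ThE[of x] by (simp add: C2_def)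
      qed
    qed
    show ?thesis using inc der lim by blast
  qed
  show ?thesis using part1 part2 part3 part4 by blast
qed


end
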